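(* Let $(J,\preccurlyeq)$ be a finite upper semilattice and let $F\colon J\to\mathrm{vect}_K$ be a filtration such that $\mathrm{supp}(\beta^0F)$ is bounded below in $J$. Then for every $d\geq 0$, \[ \langle \mathrm{supp}(\beta^{d+1}F)\rangle \subseteq \langle \mathrm{supp}(\beta^{d}F)\rangle, \] that is, $\cdots\subseteq\langle \mathrm{supp}(\beta^{2}F)\rangle\subseteq\langle \mathrm{supp}(\beta^{1}F)\rangle\subseteq\langle \mathrm{supp}(\beta^{0}F)\rangle$.
   Context: $K$ is a field and $\mathrm{vect}_K$ is the category of finite-dimensional $K$-vector spaces. A functor $F\colon J\to\mathrm{vect}_K$ is a filtration if $F(a\preccurlyeq b)$ is a monomorphism for all $a\preccurlyeq b$ in $J$. For $a\in J$, $K(a,-)\colon J\to\mathrm{vect}_K$ is the functor with $K(a,b)=K$ if $a\preccurlyeq b$ and $0$ otherwise, with identity transition maps between nonzero values. Every functor $F\colon J\to\mathrm{vect}_K$ has a minimal projective resolution $\cdots\to C_1\to C_0\to F\to 0$ (each $C_d\to\ker(C_{d-1}\to C_{d-2})$ a projective cover), unique up to isomorphism, with $C_d\cong\bigoplus_{a\in J}K(a,-)^{\beta^dF(a)}$ for uniquely determined numbers; $\beta^dF\colon J\to\mathbb N$ is the $d$-th Betti diagram and $\mathrm{supp}(\beta^dF)=\{a\mid\beta^dF(a)\neq 0\}$. An upper semilattice is a poset in which every nonempty subset has a join. For $S\subseteq J$, $\langle S\rangle:=\{\bigvee T\mid T\neq\varnothing,\ T\subseteq S\}$. *)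

theory Defs
  imports "Jordan_Normal_Form.Matrix"
begin

text \<open>Finite-dimensional K-vector spaces are modelled as K^n (carrier_vec n), linear maps
as matrices. A functor J -> vect_K is a pair (V, M): V a = dimension of F(a),
M a b = matrix of F(a \<le> b) : K^(V a) -> K^(V b).\<close>

definition is_rep :: "('j::order \<Rightarrow> nat) \<Rightarrow> ('j \<Rightarrow> 'j \<Rightarrow> 'k::field mat) \<Rightarrow> bool" where
  "is_rep V M \<longleftrightarrow>
     (\<forall>a b. a \<le> b \<longrightarrow> M a b \<in> carrier_mat (V b) (V a)) \<and>
     (\<forall>a. M a a = 1\<^sub>m (V a)) \<and>
     (\<forall>a b c. a \<le> b \<longrightarrow> b \<le> c \<longrightarrow> M b c * M a b = M a c)"

definition is_filtration :: "('j::order \<Rightarrow> nat) \<Rightarrow> ('j \<Rightarrow> 'j \<Rightarrow> 'k::field mat) \<Rightarrow> bool" where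
  "is_filtration V M \<longleftrightarrow> is_rep V M \<and>
     (\<forall>a b. a \<le> b \<longrightarrow> (\<forall>v \<in> carrier_vec (V a). M a b *\<^sub>v v = 0\<^sub>v (V b) \<longrightarrow> v = 0\<^sub>v (V a)))"

definition is_nat :: "('j::order \<Rightarrow> nat) \<Rightarrow> ('j \<Rightarrow> 'j \<Rightarrow> 'k::field mat) \<Rightarrow>
    ('j \<Rightarrow> nat) \<Rightarrow> ('j \<Rightarrow> 'j \<Rightarrow> 'k mat) \<Rightarrow> ('j \<Rightarrow> 'k mat) \<Rightarrow> bool" where
  "is_nat V M W N \<phi> \<longleftrightarrow>
     (\<forall>a. \<phi> a \<in> carrier_mat (W a) (V a)) \<and>
     (\<forall>a b. a \<le> b \<longrightarrow> N a b * \<phi> a = \<phi> b * M a b)"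

definition lincomb :: "nat \<Rightarrow> ('i \<Rightarrow> 'k::field) \<Rightarrow> ('i \<Rightarrow> 'k vec) \<Rightarrow> 'i set \<Rightarrow> 'k vec" where
  "lincomb n c v S = vec n (\<lambda>j. \<Sum>s\<in>S. c s * (v s $ j))"

definition is_basis_family :: "nat \<Rightarrow> 'i set \<Rightarrow> ('i \<Rightarrow> 'k::field vec) \<Rightarrow> bool" where
  "is_basis_family n S v \<longleftrightarrow> finite S \<and> (\<forall>s\<in>S. v s \<in> carrier_vec n) \<and>
     (\<forall>c. lincomb n c v S = 0\<^sub>v n \<longrightarrow> (\<forall>s\<in>S. c s = 0)) \<and>
     (\<forall>x\<in>carrier_vec n. \<exists>c. lincomb n c v S = x)"

text \<open>(V,M) is isomorphic to the direct sum of K(a,-)^(m a) over a in J: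
  there are generators g a i in F(a), i < m a, whose images form a basis at every b.\<close>
definition is_free_rep :: "('j::order \<Rightarrow> nat) \<Rightarrow> ('j \<Rightarrow> 'j \<Rightarrow> 'k::field mat) \<Rightarrow>
    ('j \<Rightarrow> nat) \<Rightarrow> ('j \<Rightarrow> nat \<Rightarrow> 'k vec) \<Rightarrow> bool" where
  "is_free_rep V M m g \<longleftrightarrow> is_rep V M \<and>
     (\<forall>a i. i < m a \<longrightarrow> g a i \<in> carrier_vec (V a)) \<and>
     (\<forall>b. is_basis_family (V b) {(a, i). a \<le> b \<and> i < m a} (\<lambda>(a, i). M a b *\<^sub>v g a i))"

definition is_subspace :: "nat \<Rightarrow> 'k::field vec set \<Rightarrow> bool" where
  "is_subspace n U \<longleftrightarrow> U \<subseteq> carrier_vec n \<and> 0\<^sub>v n \<in> U \<and>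
     (\<forall>x\<in>U. \<forall>y\<in>U. x + y \<in> U) \<and> (\<forall>c. \<forall>x\<in>U. c \<cdot>\<^sub>v x \<in> U)"

definition is_subfunctor :: "('j::order \<Rightarrow> nat) \<Rightarrow> ('j \<Rightarrow> 'j \<Rightarrow> 'k::field mat) \<Rightarrow>
    ('j \<Rightarrow> 'k vec set) \<Rightarrow> bool" where
  "is_subfunctor V M Q \<longleftrightarrow> (\<forall>a. is_subspace (V a) (Q a)) \<and>
     (\<forall>a b. a \<le> b \<longrightarrow> (\<forall>x\<in>Q a. M a b *\<^sub>v x \<in> Q b))"

definition img :: "'k::field mat \<Rightarrow> 'k vec set \<Rightarrow> 'k vec set" where
  "img A U = (\<lambda>x. A *\<^sub>v x) ` U"

definition kern :: "'k::field mat \<Rightarrow> 'k vec set" where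
  "kern A = {x \<in> carrier_vec (dim_col A). A *\<^sub>v x = 0\<^sub>v (dim_row A)}"

text \<open>The natural transformation phi out of (V,M), viewed as an epimorphism onto its image,
  is essential (superfluous kernel): no proper subfunctor of (V,M) maps onto the image.
  Together with projectivity this is the projective-cover condition.\<close>
definition is_essential :: "('j::order \<Rightarrow> nat) \<Rightarrow> ('j \<Rightarrow> 'j \<Rightarrow> 'k::field mat) \<Rightarrow>
    ('j \<Rightarrow> 'k mat) \<Rightarrow> bool" where
  "is_essential V M \<phi> \<longleftrightarrow>
     (\<forall>Q. is_subfunctor V M Q \<and> (\<forall>a. img (\<phi> a) (Q a) = img (\<phi> a) (carrier_vec (V a)))
          \<longrightarrow> (\<forall>a. Q a = carrier_vec (V a)))"

text \<open>A minimal projective resolution ... -> C_1 -> C_0 -> F -> 0 of F = (V,M):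
  C_d = (CV d, CM d) free with multiplicities m d (generators g d), augmentation eps : C_0 -> F,
  differentials dd d : C_(d+1) -> C_d; exact; each C_d -> ker(C_(d-1) -> C_(d-2)) a projective
  cover.\<close>
definition is_min_proj_res ::
  "('j::order \<Rightarrow> nat) \<Rightarrow> ('j \<Rightarrow> 'j \<Rightarrow> 'k::field mat) \<Rightarrow>
   (nat \<Rightarrow> 'j \<Rightarrow> nat) \<Rightarrow> (nat \<Rightarrow> 'j \<Rightarrow> 'j \<Rightarrow> 'k mat) \<Rightarrow>
   (nat \<Rightarrow> 'j \<Rightarrow> nat) \<Rightarrow> (nat \<Rightarrow> 'j \<Rightarrow> nat \<Rightarrow> 'k vec) \<Rightarrow>
   ('j \<Rightarrow> 'k mat) \<Rightarrow> (nat \<Rightarrow> 'j \<Rightarrow> 'k mat) \<Rightarrow> bool" where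
  "is_min_proj_res V M CV CM m g eps dd \<longleftrightarrow>
     (\<forall>d. is_free_rep (CV d) (CM d) (m d) (g d)) \<and>
     is_nat (CV 0) (CM 0) V M eps \<and>
     (\<forall>d. is_nat (CV (Suc d)) (CM (Suc d)) (CV d) (CM d) (dd d)) \<and>
     (\<forall>a. img (eps a) (carrier_vec (CV 0 a)) = carrier_vec (V a)) \<and>
     (\<forall>a. img (dd 0 a) (carrier_vec (CV 1 a)) = kern (eps a)) \<and>
     (\<forall>d a. img (dd (Suc d) a) (carrier_vec (CV (Suc (Suc d)) a)) = kern (dd d a)) \<and>
     is_essential (CV 0) (CM 0) eps \<and>
     (\<forall>d. is_essential (CV (Suc d)) (CM (Suc d)) (dd d))"

text \<open>In a minimal projective resolution, m d is the d-th Betti diagram (unique).\<close>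
definition supp :: "('j \<Rightarrow> nat) \<Rightarrow> 'j set" where
  "supp \<beta> = {a. \<beta> a \<noteq> 0}"

definition join_closure :: "'j::semilattice_sup set \<Rightarrow> 'j set" where
  "join_closure S = {Sup_fin T | T. T \<noteq> {} \<and> T \<subseteq> S}"

end

theory Submission
  imports Defs
begin

lemma lincomb_carrier[simp]: "lincomb n c v S \<in> carrier_vec n"
  by (simp add: lincomb_def)

lemma lincomb_dim[simp]: "dim_vec (lincomb n c v S) = n"
  by (simp add: lincomb_def)

lemma lincomb_add: "lincomb n c1 v S + lincomb n c2 v S = lincomb n (\<lambda>s. c1 s + c2 s) v S"
  by (rule eq_vecI) (auto simp: lincomb_def sum.distrib distrib_right)

lemma lincomb_smult: "k \<cdot>\<^sub>v lincomb n c v S = lincomb n (\<lambda>s. k * c s) v S"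
  by (rule eq_vecI) (auto simp: lincomb_def sum_distrib_left mult.assoc)

lemma lincomb_zero: "lincomb n (\<lambda>_. 0) v S = 0\<^sub>v n"
  by (rule eq_vecI) (auto simp: lincomb_def)

lemma lincomb_cong: "(\<And>s. s \<in> S \<Longrightarrow> c s = c' s) \<Longrightarrow> (\<And>s. s \<in> S \<Longrightarrow> v s = v' s) \<Longrightarrow>
   lincomb n c v S = lincomb n c' v' S"
  unfolding lincomb_def by (intro eq_vecI) auto

lemma lincomb_mono: assumes "finite T" "S \<subseteq> T"
  shows "lincomb n c v S = lincomb n (\<lambda>s. if s \<in> S then c s else 0) v T"
proof (rule eq_vecI)
  fix j assume "j < dim_vec (lincomb n (\<lambda>s. if s \<in> S then c s else 0) v T)"
  then have j: "j < n" by simp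
  have "(\<Sum>s\<in>T. (if s \<in> S then c s else 0) * (v s $ j)) = (\<Sum>s\<in>T. if s \<in> S then c s * (v s $ j) else 0)"
    by (rule sum.cong) auto
  also have "\<dots> = (\<Sum>s\<in>S. c s * (v s $ j))"
    using assms by (simp add: sum.If_cases Int_absorb1)
  finally show "lincomb n c v S $ j = lincomb n (\<lambda>s. if s \<in> S then c s else 0) v T $ j"
    using j by (simp add: lincomb_def)
qed simp

lemma lincomb_delta: assumes "finite S" "s0 \<in> S" "v s0 \<in> carrier_vec n"
  shows "lincomb n (\<lambda>s. if s = s0 then 1 else 0) v S = v s0"
proof (rule eq_vecI)
  fix j assume "j < dim_vec (v s0)"
  then have j: "j < n" using assms by simp
  have "(\<Sum>s\<in>S. (if s = s0 then 1 else 0) * (v s $ j)) = (\<Sum>s\<in>S. if s = s0 then v s $ j else 0)"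
    by (rule sum.cong) auto
  also have "\<dots> = v s0 $ j" using assms by simp
  finally show "lincomb n (\<lambda>s. if s = s0 then 1 else 0) v S $ j = v s0 $ j"
    using j by (simp add: lincomb_def)
qed (use assms in simp)

lemma mat_lincomb: assumes A: "A \<in> carrier_mat n k" and S: "finite S"
  and v: "\<And>s. s \<in> S \<Longrightarrow> v s \<in> carrier_vec k"
  shows "A *\<^sub>v lincomb k c v S = lincomb n c (\<lambda>s. A *\<^sub>v v s) S"
proof (rule eq_vecI)
  fix j assume "j < dim_vec (lincomb n c (\<lambda>s. A *\<^sub>v v s) S)"
  then have j: "j < n" by simp
  have "(A *\<^sub>v lincomb k c v S) $ j = (\<Sum>l<k. A $$ (j, l) * (\<Sum>s\<in>S. c s * (v s $ l)))"
    using A j by (simp add: scalar_prod_def lincomb_def lessThan_atLeast0)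
  also have "\<dots> = (\<Sum>s\<in>S. c s * (\<Sum>l<k. A $$ (j, l) * (v s $ l)))"
    by (simp add: sum_distrib_left sum.swap[of _ S] mult_ac)
  also have "\<dots> = (\<Sum>s\<in>S. c s * ((A *\<^sub>v v s) $ j))"
  proof (intro sum.cong refl)
    fix s assume "s \<in> S"
    then have "dim_vec (v s) = k" using v[of s] by (intro carrier_vecD)
    then show "c s * (\<Sum>l<k. A $$ (j, l) * (v s $ l)) = c s * ((A *\<^sub>v v s) $ j)"
      using A j by (simp add: scalar_prod_def lessThan_atLeast0)
  qed
  finally show "(A *\<^sub>v lincomb k c v S) $ j = lincomb n c (\<lambda>s. A *\<^sub>v v s) S $ j"
    using j by (simp add: lincomb_def)
qed (use A in simp)


lemma free_rep_D:
  assumes "is_free_rep V M m g"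
  shows "is_rep V M"
    and "\<And>a b. a \<le> b \<Longrightarrow> M a b \<in> carrier_mat (V b) (V a)"
    and "\<And>a. M a a = 1\<^sub>m (V a)"
    and "\<And>a b c. a \<le> b \<Longrightarrow> b \<le> c \<Longrightarrow> M b c * M a b = M a c"
    and "\<And>a i. i < m a \<Longrightarrow> g a i \<in> carrier_vec (V a)"
    and "\<And>b. finite {(a, i). a \<le> b \<and> i < m a}"
    and "\<And>b c. lincomb (V b) c (\<lambda>(a, i). M a b *\<^sub>v g a i) {(a, i). a \<le> b \<and> i < m a} = 0\<^sub>v (V b)
           \<Longrightarrow> (\<forall>s\<in>{(a, i). a \<le> b \<and> i < m a}. c s = 0)"
    and "\<And>b x. x \<in> carrier_vec (V b) \<Longrightarrow> \<exists>c. lincomb (V b) c (\<lambda>(a, i). M a b *\<^sub>v g a i) {(a, i). a \<le> b \<and> i < m a} = x"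
proof -
  have R: "is_rep V M" and G: "\<forall>a i. i < m a \<longrightarrow> g a i \<in> carrier_vec (V a)"
    and B: "\<forall>b. is_basis_family (V b) {(a, i). a \<le> b \<and> i < m a} (\<lambda>(a, i). M a b *\<^sub>v g a i)"
    using assms unfolding is_free_rep_def by simp_all
  show "is_rep V M" by (fact R)
  show "\<And>a b. a \<le> b \<Longrightarrow> M a b \<in> carrier_mat (V b) (V a)"
    and "\<And>a. M a a = 1\<^sub>m (V a)"
    and "\<And>a b c. a \<le> b \<Longrightarrow> b \<le> c \<Longrightarrow> M b c * M a b = M a c"
    using R unfolding is_rep_def by simp_all
  show "\<And>a i. i < m a \<Longrightarrow> g a i \<in> carrier_vec (V a)" using G by simp
  fix b
  have B': "is_basis_family (V b) {(a, i). a \<le> b \<and> i < m a} (\<lambda>(a, i). M a b *\<^sub>v g a i)"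
    using B by simp
  show "finite {(a, i). a \<le> b \<and> i < m a}" using B' unfolding is_basis_family_def by (elim conjE)
  show "\<And>c. lincomb (V b) c (\<lambda>(a, i). M a b *\<^sub>v g a i) {(a, i). a \<le> b \<and> i < m a} = 0\<^sub>v (V b)
           \<Longrightarrow> (\<forall>s\<in>{(a, i). a \<le> b \<and> i < m a}. c s = 0)"
    using B' unfolding is_basis_family_def by (elim conjE) blast
  show "\<And>x. x \<in> carrier_vec (V b) \<Longrightarrow> \<exists>c. lincomb (V b) c (\<lambda>(a, i). M a b *\<^sub>v g a i) {(a, i). a \<le> b \<and> i < m a} = x"
    using B' unfolding is_basis_family_def by (elim conjE) blast
qed

lemma free_push:
  assumes F: "is_free_rep V M m g" and xy: "x \<le> y" and S: "S \<subseteq> {(a, i). a \<le> x \<and> i < m a}"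
  shows "M x y *\<^sub>v lincomb (V x) c (\<lambda>(a, i). M a x *\<^sub>v g a i) S
       = lincomb (V y) c (\<lambda>(a, i). M a y *\<^sub>v g a i) S"
proof -
  have fin: "finite S" using free_rep_D(6)[OF F, of x] S finite_subset by blast
  have car: "\<And>s. s \<in> S \<Longrightarrow> (\<lambda>(a, i). M a x *\<^sub>v g a i) s \<in> carrier_vec (V x)"
  proof -
    fix s assume "s \<in> S"
    then obtain a i where s: "s = (a, i)" "a \<le> x" "i < m a" using S by blast
    show "(\<lambda>(a, i). M a x *\<^sub>v g a i) s \<in> carrier_vec (V x)"
      using s mult_mat_vec_carrier[OF free_rep_D(2)[OF F s(2)] free_rep_D(5)[OF F s(3)]] by simp
  qed
  have "M x y *\<^sub>v lincomb (V x) c (\<lambda>(a, i). M a x *\<^sub>v g a i) S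
     = lincomb (V y) c (\<lambda>s. M x y *\<^sub>v (\<lambda>(a, i). M a x *\<^sub>v g a i) s) S"
    by (rule mat_lincomb[OF free_rep_D(2)[OF F xy] fin car])
  also have "\<dots> = lincomb (V y) c (\<lambda>(a, i). M a y *\<^sub>v g a i) S"
  proof (rule lincomb_cong, simp)
    fix s assume "s \<in> S"
    then obtain a i where s: "s = (a, i)" "a \<le> x" "i < m a" using S by blast
    have "M x y *\<^sub>v (M a x *\<^sub>v g a i) = (M x y * M a x) *\<^sub>v g a i"
      using free_rep_D(2,5)[OF F] s xy by (metis assoc_mult_mat_vec)
    also have "\<dots> = M a y *\<^sub>v g a i" using free_rep_D(4)[OF F] s xy by simp
    finally show "M x y *\<^sub>v (\<lambda>(a, i). M a x *\<^sub>v g a i) s = (\<lambda>(a, i). M a y *\<^sub>v g a i) s"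
      using s by simp
  qed
  finally show ?thesis .
qed

lemma free_push2:
  assumes F: "is_free_rep V M m g" and xy: "x \<le> y"
  shows "M x y *\<^sub>v lincomb (V x) c (\<lambda>(a, i). M a x *\<^sub>v g a i) {(a, i). a \<le> x \<and> i < m a}
       = lincomb (V y) (\<lambda>s. if s \<in> {(a, i). a \<le> x \<and> i < m a} then c s else 0)
            (\<lambda>(a, i). M a y *\<^sub>v g a i) {(a, i). a \<le> y \<and> i < m a}"
  unfolding free_push[OF F xy order_refl]
  by (rule lincomb_mono[OF free_rep_D(6)[OF F]]) (use xy in auto)

lemma free_filtration:
  assumes F: "is_free_rep V M m g"
  shows "is_filtration V M"
  unfolding is_filtration_def
proof (intro conjI allI impI ballI)
  show "is_rep V M" using free_rep_D(1)[OF F] .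
  fix a b v assume ab: "a \<le> b" and v: "v \<in> carrier_vec (V a)" and z: "M a b *\<^sub>v v = 0\<^sub>v (V b)"
  obtain c where c: "lincomb (V a) c (\<lambda>(x, i). M x a *\<^sub>v g x i) {(x, i). x \<le> a \<and> i < m x} = v"
    using free_rep_D(8)[OF F v] by blast
  from z[folded c, unfolded free_push2[OF F ab]]
  have "\<forall>s\<in>{(x, i). x \<le> b \<and> i < m x}. (if s \<in> {(x, i). x \<le> a \<and> i < m x} then c s else 0) = 0"
    by (rule free_rep_D(7)[OF F])
  then have "\<forall>s\<in>{(x, i). x \<le> a \<and> i < m x}. c s = 0"
  proof (intro ballI)
    fix s assume H: "\<forall>s\<in>{(x, i). x \<le> b \<and> i < m x}. (if s \<in> {(x, i). x \<le> a \<and> i < m x} then c s else 0) = 0"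
      and s: "s \<in> {(x, i). x \<le> a \<and> i < m x}"
    then have "s \<in> {(x, i). x \<le> b \<and> i < m x}" using ab order_trans by auto
    from bspec[OF H this] s show "c s = 0" by simp
  qed
  then have "v = lincomb (V a) (\<lambda>_. 0) (\<lambda>(x, i). M x a *\<^sub>v g x i) {(x, i). x \<le> a \<and> i < m x}"
    unfolding c[symmetric] by (intro lincomb_cong) auto
  then show "v = 0\<^sub>v (V a)" by (simp add: lincomb_zero)
qed

lemma jc_char:
  fixes S :: "'j::{finite, semilattice_sup} set"
  shows "x \<in> join_closure S \<longleftrightarrow> ({s\<in>S. s \<le> x} \<noteq> {} \<and> Sup_fin {s\<in>S. s \<le> x} = x)"
proof
  assume "x \<in> join_closure S"
  then obtain T where T: "T \<noteq> {}" "T \<subseteq> S" "x = Sup_fin T" unfolding join_closure_def by blast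
  have Tx: "T \<subseteq> {s\<in>S. s \<le> x}" using T by (auto intro: Sup_fin.coboundedI)
  then have ne: "{s\<in>S. s \<le> x} \<noteq> {}" using T by blast
  have "x \<le> Sup_fin {s\<in>S. s \<le> x}" using T Tx by (metis Sup_fin.subset_imp finite)
  moreover have "Sup_fin {s\<in>S. s \<le> x} \<le> x" using ne by (intro Sup_fin.boundedI) auto
  ultimately show "{s\<in>S. s \<le> x} \<noteq> {} \<and> Sup_fin {s\<in>S. s \<le> x} = x" using ne by simp
next
  assume "{s\<in>S. s \<le> x} \<noteq> {} \<and> Sup_fin {s\<in>S. s \<le> x} = x"
  then show "x \<in> join_closure S"
    by (auto simp: join_closure_def intro!: exI[of _ "{s\<in>S. s \<le> x}"])
qed

lemma jc_idem:
  fixes S :: "'j::{finite, semilattice_sup} set"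
  assumes "S' \<subseteq> join_closure S"
  shows "join_closure S' \<subseteq> join_closure S"
proof
  fix x assume "x \<in> join_closure S'"
  then obtain T where T: "T \<noteq> {}" "T \<subseteq> S'" "x = Sup_fin T" unfolding join_closure_def by blast
  define U where "U = {s\<in>S. s \<le> x}"
  have tx: "t \<le> x" if "t \<in> T" for t using T that by (auto intro: Sup_fin.coboundedI)
  have tU: "{s\<in>S. s \<le> t} \<noteq> {} \<and> t \<le> Sup_fin U" if "t \<in> T" for t
  proof -
    have c: "{s\<in>S. s \<le> t} \<noteq> {} \<and> Sup_fin {s\<in>S. s \<le> t} = t"
      using T assms that jc_char by blast
    moreover have "{s\<in>S. s \<le> t} \<subseteq> U" using tx[OF that] unfolding U_def by auto
    ultimately show ?thesis by (metis Sup_fin.subset_imp finite)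
  qed
  have ne: "U \<noteq> {}" using tU T(1) tx unfolding U_def by fastforce
  have "x \<le> Sup_fin U" using T tU by (auto intro: Sup_fin.boundedI)
  moreover have "Sup_fin U \<le> x" using ne unfolding U_def by (intro Sup_fin.boundedI) auto
  ultimately have "Sup_fin U = x" by simp
  then show "x \<in> join_closure S" using ne jc_char unfolding U_def by blast
qed

lemma key:
  fixes b :: "'j::{finite, semilattice_sup}"
    and PV :: "'j \<Rightarrow> nat" and PM :: "'j \<Rightarrow> 'j \<Rightarrow> 'k::field mat"
  assumes P: "is_free_rep PV PM mp gp" and R: "is_free_rep RV RM mr gr"
    and T: "is_filtration TV TM"
    and phi: "is_nat PV PM TV TM \<phi>" and psi: "is_nat RV RM PV PM \<psi>"
    and ex: "\<forall>x. img (\<psi> x) (carrier_vec (RV x)) = kern (\<phi> x)"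
    and ess: "is_essential RV RM \<psi>"
    and b: "b \<notin> join_closure (supp mp)"
  shows "mr b = 0"
proof (rule ccontr)
  assume "mr b \<noteq> 0" then have mb: "0 < mr b" by simp
  define \<gamma> where "\<gamma> = gr b 0"
  have \<gamma>c: "\<gamma> \<in> carrier_vec (RV b)" using free_rep_D(5)[OF R mb] \<gamma>_def by simp
  have phic: "\<And>x. \<phi> x \<in> carrier_mat (TV x) (PV x)"
    and phinat: "\<And>x y. x \<le> y \<Longrightarrow> TM x y * \<phi> x = \<phi> y * PM x y"
    using phi unfolding is_nat_def by auto
  have psic: "\<And>x. \<psi> x \<in> carrier_mat (PV x) (RV x)"
    and psinat: "\<And>x y. x \<le> y \<Longrightarrow> PM x y * \<psi> x = \<psi> y * RM x y"
    using psi unfolding is_nat_def by auto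
  have Tinj: "\<And>x y v. x \<le> y \<Longrightarrow> v \<in> carrier_vec (TV x) \<Longrightarrow> TM x y *\<^sub>v v = 0\<^sub>v (TV y) \<Longrightarrow> v = 0\<^sub>v (TV x)"
    using T unfolding is_filtration_def by blast
  have TMc: "\<And>x y. x \<le> y \<Longrightarrow> TM x y \<in> carrier_mat (TV y) (TV x)"
    using T unfolding is_filtration_def is_rep_def by blast
  define IP where "IP x = {(a, i). a \<le> x \<and> i < mp a}" for x
  define IR where "IR x = {(a, i). a \<le> x \<and> i < mr a}" for x
  define eP where "eP x = (\<lambda>(a, i). PM a x *\<^sub>v gp a i)" for x
  define eR where "eR x = (\<lambda>(a, i). RM a x *\<^sub>v gr a i)" for x
  define Q where "Q x = {lincomb (RV x) c (eR x) (IR x) | c. c (b, 0) = 0}" for x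
  have Pspan: "\<And>x v. v \<in> carrier_vec (PV x) \<Longrightarrow> \<exists>k. lincomb (PV x) k (eP x) (IP x) = v"
    unfolding eP_def IP_def by (rule free_rep_D(8)[OF P])
  have Rspan: "\<And>x v. v \<in> carrier_vec (RV x) \<Longrightarrow> \<exists>k. lincomb (RV x) k (eR x) (IR x) = v"
    unfolding eR_def IR_def by (rule free_rep_D(8)[OF R])
  have RMc: "\<And>x y. x \<le> y \<Longrightarrow> RM x y \<in> carrier_mat (RV y) (RV x)"
    using free_rep_D(2)[OF R] .
  have PMc: "\<And>x y. x \<le> y \<Longrightarrow> PM x y \<in> carrier_mat (PV y) (PV x)"
    using free_rep_D(2)[OF P] .
  have inQ: "lincomb (RV x) c (eR x) (IR x) \<in> Q x" if "c (b, 0) = 0" for x c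
    unfolding Q_def using that by blast
  have psi_push: "\<psi> y *\<^sub>v (RM x y *\<^sub>v r) = PM x y *\<^sub>v (\<psi> x *\<^sub>v r)"
    if "x \<le> y" "r \<in> carrier_vec (RV x)" for x y r
  proof -
    have "\<psi> y *\<^sub>v (RM x y *\<^sub>v r) = (\<psi> y * RM x y) *\<^sub>v r"
      using psic RMc that by (metis assoc_mult_mat_vec)
    also have "\<dots> = (PM x y * \<psi> x) *\<^sub>v r" using psinat that by simp
    also have "\<dots> = PM x y *\<^sub>v (\<psi> x *\<^sub>v r)"
      using psic PMc that by (metis assoc_mult_mat_vec)
    finally show ?thesis .
  qed
  obtain q where q: "q \<in> Q b" "\<psi> b *\<^sub>v \<gamma> = \<psi> b *\<^sub>v q"
  proof (cases "{a \<in> supp mp. a \<le> b} = {}")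
    case True
    have IPe: "IP b = {}"
    proof (rule ccontr)
      assume "IP b \<noteq> {}"
      then obtain a i where "a \<le> b" "i < mp a" unfolding IP_def by blast
      then have "a \<in> {a \<in> supp mp. a \<le> b}" unfolding supp_def by simp
      then show False using True by blast
    qed
    have "\<psi> b *\<^sub>v \<gamma> \<in> carrier_vec (PV b)" by (rule mult_mat_vec_carrier[OF psic \<gamma>c])
    then obtain k where "lincomb (PV b) k (eP b) (IP b) = \<psi> b *\<^sub>v \<gamma>" using Pspan by blast
    then have "\<psi> b *\<^sub>v \<gamma> = 0\<^sub>v (PV b)" using IPe by (auto simp: lincomb_def zero_vec_def)
    also have "\<dots> = \<psi> b *\<^sub>v 0\<^sub>v (RV b)" using psic[of b] by auto
    finally have "\<psi> b *\<^sub>v \<gamma> = \<psi> b *\<^sub>v 0\<^sub>v (RV b)" .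
    moreover have "0\<^sub>v (RV b) \<in> Q b" using inQ[of "\<lambda>_. 0" b] by (simp add: lincomb_zero)
    ultimately show ?thesis using that by blast
  next
    case False
    define U where "U = {a \<in> supp mp. a \<le> b}"
    define c where "c = Sup_fin U"
    have cU: "\<And>a. a \<in> U \<Longrightarrow> a \<le> c" unfolding c_def by (intro Sup_fin.coboundedI) auto
    have cb: "c \<le> b" unfolding c_def using False U_def by (intro Sup_fin.boundedI) auto
    have "{s \<in> supp mp. s \<le> c} = U" using cU cb unfolding U_def by (auto intro: order_trans)
    then have cjc: "c \<in> join_closure (supp mp)" using jc_char False U_def c_def by metis
    have cnb: "c \<noteq> b" using b cjc by auto
    have "\<psi> b *\<^sub>v \<gamma> \<in> kern (\<phi> b)" using ex \<gamma>c unfolding img_def by blast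
    then have z: "\<psi> b *\<^sub>v \<gamma> \<in> carrier_vec (PV b)" "\<phi> b *\<^sub>v (\<psi> b *\<^sub>v \<gamma>) = 0\<^sub>v (TV b)"
      using phic[of b] unfolding kern_def by auto
    obtain k where k: "lincomb (PV b) k (eP b) (IP b) = \<psi> b *\<^sub>v \<gamma>" using Pspan z(1) by blast
    have IPs: "IP b \<subseteq> IP c"
    proof
      fix s assume "s \<in> IP b"
      then obtain a i where s: "s = (a, i)" "a \<le> b" "i < mp a" unfolding IP_def by blast
      then have "a \<in> U" unfolding U_def supp_def by auto
      then show "s \<in> IP c" using s cU unfolding IP_def by auto
    qed
    define y where "y = lincomb (PV c) k (eP c) (IP b)"
    have yc: "y \<in> carrier_vec (PV c)" unfolding y_def by simp
    have Py: "PM c b *\<^sub>v y = \<psi> b *\<^sub>v \<gamma>"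
      using free_push[OF P cb IPs[unfolded IP_def]] k unfolding y_def eP_def IP_def by simp
    have "TM c b *\<^sub>v (\<phi> c *\<^sub>v y) = (TM c b * \<phi> c) *\<^sub>v y"
      using TMc[OF cb] phic yc by (metis assoc_mult_mat_vec)
    also have "\<dots> = (\<phi> b * PM c b) *\<^sub>v y" using phinat[OF cb] by simp
    also have "\<dots> = \<phi> b *\<^sub>v (PM c b *\<^sub>v y)" using PMc[OF cb] phic yc by (metis assoc_mult_mat_vec)
    finally have "TM c b *\<^sub>v (\<phi> c *\<^sub>v y) = 0\<^sub>v (TV b)" using Py z by simp
    then have "\<phi> c *\<^sub>v y = 0\<^sub>v (TV c)" using Tinj[OF cb] phic[of c] yc by simp
    then have "y \<in> kern (\<phi> c)" using phic[of c] yc unfolding kern_def by simp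
    then obtain r where r: "r \<in> carrier_vec (RV c)" "y = \<psi> c *\<^sub>v r"
      using ex unfolding img_def by (metis imageE)
    obtain k' where k': "lincomb (RV c) k' (eR c) (IR c) = r" using Rspan r(1) by blast
    define q where "q = RM c b *\<^sub>v r"
    have qe: "q = lincomb (RV b) (\<lambda>s. if s \<in> IR c then k' s else 0) (eR b) (IR b)"
      using free_push2[OF R cb, of k'] k' unfolding q_def eR_def IR_def by simp
    have "(b, 0) \<notin> IR c" using cb cnb unfolding IR_def by auto
    then have "q \<in> Q b" unfolding qe by (intro inQ) simp
    moreover have "\<psi> b *\<^sub>v q = \<psi> b *\<^sub>v \<gamma>"
      using psi_push[OF cb r(1)] r(2) Py unfolding q_def by simp
    ultimately show ?thesis using that by metis
  qed
  have Qc: "\<And>x v. v \<in> Q x \<Longrightarrow> v \<in> carrier_vec (RV x)" unfolding Q_def by auto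
  have Qadd: "v + w \<in> Q x" if hh: "v \<in> Q x" "w \<in> Q x" for x v w
  proof -
    obtain c1 where c1: "v = lincomb (RV x) c1 (eR x) (IR x)" "c1 (b, 0) = 0"
      using hh(1) unfolding Q_def by blast
    obtain c2 where c2: "w = lincomb (RV x) c2 (eR x) (IR x)" "c2 (b, 0) = 0"
      using hh(2) unfolding Q_def by blast
    show ?thesis using inQ[of "\<lambda>s. c1 s + c2 s" x] c1 c2 by (simp add: lincomb_add)
  qed
  have Qsm: "k \<cdot>\<^sub>v v \<in> Q x" if hh: "v \<in> Q x" for x v k
  proof -
    obtain c1 where c1: "v = lincomb (RV x) c1 (eR x) (IR x)" "c1 (b, 0) = 0"
      using hh(1) unfolding Q_def by blast
    show ?thesis using inQ[of "\<lambda>s. k * c1 s" x] c1 by (simp add: lincomb_smult)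
  qed
  have Q0: "0\<^sub>v (RV x) \<in> Q x" for x using inQ[of "\<lambda>_. 0" x] by (simp add: lincomb_zero)
  have Qmap: "RM x y *\<^sub>v v \<in> Q y" if hh: "x \<le> y" "v \<in> Q x" for x y v
  proof -
    obtain c1 where c1: "v = lincomb (RV x) c1 (eR x) (IR x)" "c1 (b, 0) = 0"
      using hh(2) unfolding Q_def by blast
    have "RM x y *\<^sub>v v = lincomb (RV y) (\<lambda>s. if s \<in> IR x then c1 s else 0) (eR y) (IR y)"
      using free_push2[OF R hh(1), of c1] c1 unfolding eR_def IR_def by simp
    then show ?thesis using c1(2) inQ[of "\<lambda>s. if s \<in> IR x then c1 s else 0" y] by simp
  qed
  have sub: "is_subfunctor RV RM Q"
    unfolding is_subfunctor_def is_subspace_def using Qc Q0 Qadd Qsm Qmap by blast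
  have imgQ: "img (\<psi> x) (Q x) = img (\<psi> x) (carrier_vec (RV x))" for x
  proof
    show "img (\<psi> x) (Q x) \<subseteq> img (\<psi> x) (carrier_vec (RV x))" using Qc unfolding img_def by blast
    show "img (\<psi> x) (carrier_vec (RV x)) \<subseteq> img (\<psi> x) (Q x)"
    proof
      fix u assume "u \<in> img (\<psi> x) (carrier_vec (RV x))"
      then obtain w where w: "w \<in> carrier_vec (RV x)" "u = \<psi> x *\<^sub>v w" unfolding img_def by blast
      obtain c1 where c1: "lincomb (RV x) c1 (eR x) (IR x) = w" using Rspan w(1) by blast
      define c0 where "c0 = c1((b, 0) := 0)"
      define w0 where "w0 = lincomb (RV x) c0 (eR x) (IR x)"
      have w0Q: "w0 \<in> Q x" unfolding w0_def c0_def by (intro inQ) simp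
      show "u \<in> img (\<psi> x) (Q x)"
      proof (cases "b \<le> x")
        case False
        then have "(b, 0) \<notin> IR x" unfolding IR_def by auto
        then have "w = w0" unfolding c1[symmetric] w0_def c0_def by (intro lincomb_cong) auto
        then show ?thesis using w0Q w(2) unfolding img_def by blast
      next
        case True
        have inI: "(b, 0) \<in> IR x" using True mb unfolding IR_def by auto
        have finI: "finite (IR x)" unfolding IR_def by (rule free_rep_D(6)[OF R])
        have eb: "eR x (b, 0) = RM b x *\<^sub>v \<gamma>" unfolding eR_def \<gamma>_def by simp
        have ec: "eR x (b, 0) \<in> carrier_vec (RV x)" unfolding eb using RMc[OF True] \<gamma>c by simp
        have "w = lincomb (RV x) (\<lambda>s. c0 s + c1 (b, 0) * (if s = (b, 0) then 1 else 0)) (eR x) (IR x)"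
          unfolding c1[symmetric] c0_def by (intro lincomb_cong) auto
        also have "\<dots> = w0 + c1 (b, 0) \<cdot>\<^sub>v lincomb (RV x) (\<lambda>s. if s = (b, 0) then 1 else 0) (eR x) (IR x)"
          unfolding w0_def lincomb_smult lincomb_add by simp
        also have "\<dots> = w0 + c1 (b, 0) \<cdot>\<^sub>v (RM b x *\<^sub>v \<gamma>)" using lincomb_delta[where v="eR _", OF finI inI ec] eb by simp
        finally have wd: "w = w0 + c1 (b, 0) \<cdot>\<^sub>v (RM b x *\<^sub>v \<gamma>)" .
        define w' where "w' = w0 + c1 (b, 0) \<cdot>\<^sub>v (RM b x *\<^sub>v q)"
        have qc: "q \<in> carrier_vec (RV b)" using Qc q(1) .
        have w'Q: "w' \<in> Q x" unfolding w'_def using Qadd Qsm Qmap[OF True q(1)] w0Q by blast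
        have w0c: "w0 \<in> carrier_vec (RV x)" unfolding w0_def by simp
        have e1: "\<psi> x *\<^sub>v w = \<psi> x *\<^sub>v w0 + c1 (b, 0) \<cdot>\<^sub>v (\<psi> x *\<^sub>v (RM b x *\<^sub>v \<gamma>))"
          using wd psic[of x] w0c mult_mat_vec_carrier[OF RMc[OF True] \<gamma>c]
          by (simp add: mult_add_distrib_mat_vec mult_mat_vec)
        have e2: "\<psi> x *\<^sub>v (RM b x *\<^sub>v \<gamma>) = \<psi> x *\<^sub>v (RM b x *\<^sub>v q)"
          using psi_push[OF True \<gamma>c] psi_push[OF True qc] q(2) by simp
        have e3: "\<psi> x *\<^sub>v w0 + c1 (b, 0) \<cdot>\<^sub>v (\<psi> x *\<^sub>v (RM b x *\<^sub>v q)) = \<psi> x *\<^sub>v w'"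
          unfolding w'_def using psic[of x] w0c mult_mat_vec_carrier[OF RMc[OF True] qc]
          by (simp add: mult_add_distrib_mat_vec mult_mat_vec)
        have "u = \<psi> x *\<^sub>v w'" using w(2) e1 e2 e3 by simp
        then show ?thesis using w'Q unfolding img_def by blast
      qed
    qed
  qed
  have "\<gamma> \<notin> Q b"
  proof
    assume "\<gamma> \<in> Q b"
    then obtain c1 where c1: "\<gamma> = lincomb (RV b) c1 (eR b) (IR b)" "c1 (b, 0) = 0"
      unfolding Q_def by blast
    have inI: "(b, 0) \<in> IR b" using mb unfolding IR_def by auto
    have finI: "finite (IR b)" unfolding IR_def by (rule free_rep_D(6)[OF R])
    have eb: "eR b (b, 0) = \<gamma>" unfolding eR_def using free_rep_D(3)[OF R] \<gamma>c \<gamma>_def by simp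
    have ec: "eR b (b, 0) \<in> carrier_vec (RV b)" using eb \<gamma>c by simp
    have "lincomb (RV b) (\<lambda>s. c1 s + (-1) * (if s = (b, 0) then 1 else 0)) (eR b) (IR b)
        = lincomb (RV b) c1 (eR b) (IR b) + (-1) \<cdot>\<^sub>v lincomb (RV b) (\<lambda>s. if s = (b, 0) then 1 else 0) (eR b) (IR b)"
      by (simp add: lincomb_add lincomb_smult)
    also have "\<dots> = \<gamma> + (-1) \<cdot>\<^sub>v \<gamma>" using lincomb_delta[where v="eR _", OF finI inI ec] eb c1(1) by simp
    also have "\<dots> = 0\<^sub>v (RV b)" using \<gamma>c by (intro eq_vecI) auto
    finally have "\<forall>s\<in>IR b. c1 s + (-1) * (if s = (b, 0) then 1 else 0) = 0"
      using free_rep_D(7)[OF R] unfolding eR_def IR_def by blast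
    then have "c1 (b, 0) + (-1) * 1 = 0" using inI by fastforce
    then show False using c1(2) by simp
  qed
  then have "Q b \<noteq> carrier_vec (RV b)" using \<gamma>c by blast
  moreover have "Q b = carrier_vec (RV b)" using ess sub imgQ unfolding is_essential_def by blast
  ultimately show False by blast
qed

theorem corollary4p3:
  fixes V :: "'j::{finite, semilattice_sup} \<Rightarrow> nat"
    and M :: "'j \<Rightarrow> 'j \<Rightarrow> 'k::field mat"
    and CV :: "nat \<Rightarrow> 'j \<Rightarrow> nat" and CM :: "nat \<Rightarrow> 'j \<Rightarrow> 'j \<Rightarrow> 'k mat"
    and m :: "nat \<Rightarrow> 'j \<Rightarrow> nat" and g :: "nat \<Rightarrow> 'j \<Rightarrow> nat \<Rightarrow> 'k vec"
    and eps :: "'j \<Rightarrow> 'k mat" and dd :: "nat \<Rightarrow> 'j \<Rightarrow> 'k mat"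
  assumes "is_filtration V M"
    and "is_min_proj_res V M CV CM m g eps dd"
    and "\<exists>l. \<forall>a \<in> supp (m 0). l \<le> a"
  shows "\<forall>d. join_closure (supp (m (Suc d))) \<subseteq> join_closure (supp (m d))"
proof -
  have F: "\<And>d. is_free_rep (CV d) (CM d) (m d) (g d)"
    and N0: "is_nat (CV 0) (CM 0) V M eps"
    and Nd: "\<And>d. is_nat (CV (Suc d)) (CM (Suc d)) (CV d) (CM d) (dd d)"
    and E0: "\<forall>a. img (dd 0 a) (carrier_vec (CV 1 a)) = kern (eps a)"
    and Ed: "\<And>d. \<forall>a. img (dd (Suc d) a) (carrier_vec (CV (Suc (Suc d)) a)) = kern (dd d a)"
    and Es: "\<And>d. is_essential (CV (Suc d)) (CM (Suc d)) (dd d)"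
    using assms(2) unfolding is_min_proj_res_def by simp_all
  have E0': "\<forall>a. img (dd 0 a) (carrier_vec (CV (Suc 0) a)) = kern (eps a)"
    using E0 by (simp add: One_nat_def)
  have step: "supp (m (Suc d)) \<subseteq> join_closure (supp (m d))" for d
  proof
    fix b assume bs: "b \<in> supp (m (Suc d))"
    show "b \<in> join_closure (supp (m d))"
    proof (rule ccontr)
      assume nb: "b \<notin> join_closure (supp (m d))"
      have "m (Suc d) b = 0"
      proof (cases d)
        case 0
        show ?thesis
          using key[OF F[of 0] F[of "Suc 0"] assms(1) N0 Nd[of 0] E0' Es[of 0]] nb 0 by simp
      next
        case (Suc e)
        show ?thesis
          using key[OF F[of "Suc e"] F[of "Suc (Suc e)"] free_filtration[OF F[of e]] Nd[of e]
              Nd[of "Suc e"] Ed[of e] Es[of "Suc e"]] nb Suc by simp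
      qed
      then show False using bs unfolding supp_def by simp
    qed
  qed
  show ?thesis using step jc_idem by blast
qed

end
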